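(* Let $R$ be an integral domain and let $A=\mathrm{diag}(\lambda_1,\dots,\lambda_n)\in R^{n\times n}$ be a diagonal matrix. If $A+tI$ has a Smith form over $R[t]$, then every nonzero difference $\lambda_i-\lambda_j$ is a unit of $R$. In particular, for $R=\mathbb{Z}$, a diagonal matrix $A\in\mathbb{Z}^{n\times n}$ has the property that $A+tI$ has a Smith form over $\mathbb{Z}[t]$ if and only if its diagonal entries take at most two distinct values, and, when there are two, they differ by $1$.
   Context: A matrix over a commutative ring $S$ is in Smith form if it is diagonal with diagonal entries $s_1,s_2,\dots$ such that $s_i\mid s_{i+1}$ in $S$; a matrix $B$ has a Smith form over $S$ if $PBQ$ is in Smith form for some invertible matrices $P,Q$ over $S$. *)

theory Defs
  imports "Jordan_Normal_Form.Matrix" "HOL-Computational_Algebra.Polynomial"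
begin

definition is_smith_form :: "'a::comm_ring_1 mat \<Rightarrow> bool" where
  "is_smith_form B \<longleftrightarrow> diagonal_mat B \<and>
     (\<forall>i. Suc i < min (dim_row B) (dim_col B) \<longrightarrow> B $$ (i,i) dvd B $$ (Suc i, Suc i))"

definition has_smith_form :: "'a::comm_ring_1 mat \<Rightarrow> bool" where
  "has_smith_form B \<longleftrightarrow> (\<exists>P Q. P \<in> carrier_mat (dim_row B) (dim_row B) \<and>
     Q \<in> carrier_mat (dim_col B) (dim_col B) \<and> invertible_mat P \<and> invertible_mat Q \<and>
     is_smith_form (P * B * Q))"

definition plus_tI :: "'a::comm_ring_1 mat \<Rightarrow> 'a poly mat" where
  "plus_tI A = map_mat (\<lambda>x. [:x:]) A + [:0, 1:] \<cdot>\<^sub>m 1\<^sub>m (dim_row A)"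

end

theory Submission
  imports Defs
begin

lemma diag_mult_left:
  assumes D: "D \<in> carrier_mat n n" and dD: "diagonal_mat D" and X: "X \<in> carrier_mat n m"
    and i: "i < n" and j: "j < m"
  shows "(D * X) $$ (i,j) = D $$ (i,i) * X $$ (i,j)"
proof -
  have "(D * X) $$ (i,j) = (\<Sum>k\<in>{0..<n}. D $$ (i,k) * X $$ (k,j))"
    using D X i j by (simp add: scalar_prod_def)
  also have "\<dots> = (\<Sum>k\<in>{0..<n}. if k = i then D $$ (i,i) * X $$ (i,j) else 0)"
    by (rule sum.cong, insert dD D i, auto simp: diagonal_mat_def)
  also have "\<dots> = D $$ (i,i) * X $$ (i,j)" using i by simp
  finally show ?thesis .
qed

lemma diag_mult_right:
  assumes D: "D \<in> carrier_mat m m" and dD: "diagonal_mat D" and X: "X \<in> carrier_mat n m"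
    and i: "i < n" and j: "j < m"
  shows "(X * D) $$ (i,j) = X $$ (i,j) * D $$ (j,j)"
proof -
  have "(X * D) $$ (i,j) = (\<Sum>k\<in>{0..<m}. X $$ (i,k) * D $$ (k,j))"
    using D X i j by (simp add: scalar_prod_def)
  also have "\<dots> = (\<Sum>k\<in>{0..<m}. if k = j then X $$ (i,j) * D $$ (j,j) else 0)"
    by (rule sum.cong, insert dD D j, auto simp: diagonal_mat_def)
  also have "\<dots> = X $$ (i,j) * D $$ (j,j)" using j by simp
  finally show ?thesis .
qed

lemma invertible_wit:
  assumes "invertible_mat P" "P \<in> carrier_mat n n"
  shows "\<exists>Pi. Pi \<in> carrier_mat n n \<and> P * Pi = 1\<^sub>m n \<and> Pi * P = 1\<^sub>m n"
proof -
  from assms obtain B where B: "P * B = 1\<^sub>m n" "B * P = 1\<^sub>m (dim_row B)"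
    unfolding invertible_mat_def inverts_mat_def by auto
  have "dim_col B = n" using B(1) by (metis index_mult_mat(3) index_one_mat(3))
  moreover have "dim_row B = n" using B(2) assms(2)
    by (metis carrier_matD(2) index_mult_mat(3) index_one_mat(3))
  ultimately show ?thesis using B by (intro exI[of _ B]) auto
qed

lemma poly_diff_dvd: "(x - y) dvd (poly f x - poly f (y::'a::comm_ring_1))"
proof (induction f)
  case 0 then show ?case by simp
next
  case (pCons c f)
  have "poly (pCons c f) x - poly (pCons c f) y = (x - y) * poly f x + y * (poly f x - poly f y)"
    by (simp add: algebra_simps)
  then show ?case using pCons.IH by simp
qed

definition goodp :: "'a::comm_ring_1 \<Rightarrow> 'a \<Rightarrow> 'a poly \<Rightarrow> bool" where
  "goodp d x f \<longleftrightarrow> d dvd poly f x"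

lemma good_mult_left:
  assumes X: "X \<in> carrier_mat n m" and Y: "Y \<in> carrier_mat k n"
    and g: "\<And>i j. i < n \<Longrightarrow> j < m \<Longrightarrow> goodp d x (X $$ (i,j))"
    and i: "i < k" and j: "j < m"
  shows "goodp d x ((Y * X) $$ (i,j))"
proof -
  have "(Y * X) $$ (i,j) = (\<Sum>l\<in>{0..<n}. Y $$ (i,l) * X $$ (l,j))"
    using X Y i j by (simp add: scalar_prod_def)
  moreover have "d dvd poly (\<Sum>l\<in>{0..<n}. Y $$ (i,l) * X $$ (l,j)) x"
    unfolding poly_sum using g j by (auto intro!: dvd_sum simp: goodp_def)
  ultimately show ?thesis by (simp add: goodp_def)
qed

lemma good_mult_right:
  assumes X: "X \<in> carrier_mat n m" and Y: "Y \<in> carrier_mat m k"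
    and g: "\<And>i j. i < n \<Longrightarrow> j < m \<Longrightarrow> goodp d x (X $$ (i,j))"
    and i: "i < n" and j: "j < k"
  shows "goodp d x ((X * Y) $$ (i,j))"
proof -
  have "(X * Y) $$ (i,j) = (\<Sum>l\<in>{0..<m}. X $$ (i,l) * Y $$ (l,j))"
    using X Y i j by (simp add: scalar_prod_def)
  moreover have "d dvd poly (\<Sum>l\<in>{0..<m}. X $$ (i,l) * Y $$ (l,j)) x"
    unfolding poly_sum using g i by (auto intro!: dvd_sum simp: goodp_def)
  ultimately show ?thesis by (simp add: goodp_def)
qed

lemma chain_dvd:
  fixes s :: "nat \<Rightarrow> 'a::comm_monoid_mult"
  assumes "\<And>k. Suc k < n \<Longrightarrow> s k dvd s (Suc k)" "k < n"
  shows "s k dvd s (n - 1)"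
proof -
  have "\<And>d. d < n - k \<Longrightarrow> s k dvd s (k + d)"
  proof -
    fix d show "d < n - k \<Longrightarrow> s k dvd s (k + d)"
    proof (induction d)
      case (Suc d)
      then have "s (k + d) dvd s (Suc (k + d))" using assms(1) by simp
      moreover have h2: "s k dvd s (k + d)" using Suc by simp
      ultimately have "s k dvd s (Suc (k + d))" using dvd_trans[OF h2] by blast
      then show ?case by simp
    qed simp
  qed
  from this[of "n - 1 - k"] assms(2) show ?thesis by simp
qed

lemma part1_core:
  fixes B :: "'a::idom poly mat"
  assumes B: "B \<in> carrier_mat n n" and dB: "diagonal_mat B"
    and Bent: "\<And>l. l < n \<Longrightarrow> B $$ (l,l) = [:lam l, 1:]"
    and P: "P \<in> carrier_mat n n" and Q: "Q \<in> carrier_mat n n"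
    and iP: "invertible_mat P" and iQ: "invertible_mat Q"
    and sm: "is_smith_form (P * B * Q)"
    and i: "i < n" and j: "j < n" and ne: "lam i \<noteq> lam j"
  shows "(lam i - lam j) dvd 1"
proof -
  obtain Pi where Pi: "Pi \<in> carrier_mat n n" "P * Pi = 1\<^sub>m n" "Pi * P = 1\<^sub>m n"
    using invertible_wit[OF iP P] by auto
  obtain Qi where Qi: "Qi \<in> carrier_mat n n" "Q * Qi = 1\<^sub>m n" "Qi * Q = 1\<^sub>m n"
    using invertible_wit[OF iQ Q] by auto
  define S where "S = P * B * Q"
  have S: "S \<in> carrier_mat n n" unfolding S_def using P B Q by auto
  have dS: "diagonal_mat S" using sm unfolding S_def is_smith_form_def by auto
  have ch0: "\<forall>i. Suc i < min (dim_row S) (dim_col S) \<longrightarrow> S $$ (i,i) dvd S $$ (Suc i, Suc i)"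
    using sm unfolding S_def is_smith_form_def by blast
  have ch: "\<And>k. Suc k < n \<Longrightarrow> S $$ (k,k) dvd S $$ (Suc k, Suc k)"
  proof -
    fix k assume "Suc k < n"
    then have "Suc k < min (dim_row S) (dim_col S)" using S by auto
    then show "S $$ (k,k) dvd S $$ (Suc k, Suc k)" using ch0 by blast
  qed
  define s where "s = S $$ (n-1, n-1)"
  have sdvd: "\<And>k. k < n \<Longrightarrow> S $$ (k,k) dvd s"
    unfolding s_def using chain_dvd[of n "\<lambda>k. S $$ (k,k)", OF ch] by auto
  define M where "M = mat n n (\<lambda>(k,l). if k = l then (if k = n - 1 then 1 else (SOME x. s = S $$ (k,k) * x)) else 0)"
  have M: "M \<in> carrier_mat n n" unfolding M_def by auto
  have dM: "diagonal_mat M" unfolding M_def diagonal_mat_def by auto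
  have SM: "S * M = s \<cdot>\<^sub>m 1\<^sub>m n"
  proof (rule eq_matI)
    fix k l assume k: "k < dim_row (s \<cdot>\<^sub>m 1\<^sub>m n)" and l: "l < dim_col (s \<cdot>\<^sub>m 1\<^sub>m n)"
    then have k: "k < n" and l: "l < n" by auto
    have "(S * M) $$ (k,l) = S $$ (k,k) * M $$ (k,l)" by (rule diag_mult_left[OF S dS M k l])
    also have "\<dots> = (s \<cdot>\<^sub>m 1\<^sub>m n) $$ (k,l)"
    proof (cases "k = l")
      case True
      show ?thesis
      proof (cases "k = n - 1")
        case True2: True
        then show ?thesis using True k unfolding M_def s_def by simp
      next
        case False
        have "\<exists>x. s = S $$ (k,k) * x" using sdvd[OF k] by (auto elim: dvdE)
        then have "s = S $$ (k,k) * (SOME x. s = S $$ (k,k) * x)" by (rule someI_ex)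
        then show ?thesis using True False k unfolding M_def by simp
      qed
    qed (insert k l, simp add: M_def)
    finally show "(S * M) $$ (k,l) = (s \<cdot>\<^sub>m 1\<^sub>m n) $$ (k,l)" .
  qed (insert S M, auto)
  have M1: "M $$ (n-1, n-1) = 1" using i unfolding M_def by simp
  define N where "N = Q * M * P"
  have N: "N \<in> carrier_mat n n" unfolding N_def using Q M P by auto
  have BS: "B = Pi * S * Qi"
  proof -
    have "Pi * S * Qi = (Pi * P) * B * (Q * Qi)" unfolding S_def
      using Pi(1) Qi(1) P Q B by (simp add: assoc_mult_mat[of _ n n _ n _ n])
    also have "\<dots> = B" using Pi Qi B by simp
    finally show ?thesis by simp
  qed
  have BN: "B * N = s \<cdot>\<^sub>m 1\<^sub>m n"
  proof -
    have "B * N = Pi * (S * (Qi * Q) * M) * P" unfolding BS N_def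
      using Pi(1) Qi(1) P Q S M by (simp add: assoc_mult_mat[of _ n n _ n _ n])
    also have "\<dots> = Pi * (s \<cdot>\<^sub>m 1\<^sub>m n) * P" using Qi S SM by simp
    also have "\<dots> = (s \<cdot>\<^sub>m Pi) * P"
      using mult_smult_distrib[of Pi n n "1\<^sub>m n" n s] Pi(1) by simp
    also have "\<dots> = s \<cdot>\<^sub>m (Pi * P)" using Pi(1) P
      by (simp add: mult_smult_assoc_mat[of _ n n])
    also have "\<dots> = s \<cdot>\<^sub>m 1\<^sub>m n" using Pi by simp
    finally show ?thesis .
  qed
  have MN: "M = Qi * N * Pi"
  proof -
    have "Qi * N * Pi = (Qi * Q) * M * (P * Pi)" unfolding N_def
      using Pi(1) Qi(1) P Q M by (simp add: assoc_mult_mat[of _ n n _ n _ n])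
    then show ?thesis using Qi Pi M by simp
  qed
  have BNe: "\<And>k l. k < n \<Longrightarrow> l < n \<Longrightarrow> [:lam k, 1:] * N $$ (k,l) = (if k = l then s else 0)"
  proof -
    fix k l assume k: "k < n" and l: "l < n"
    have e1: "(B * N) $$ (k,l) = B $$ (k,k) * N $$ (k,l)" by (rule diag_mult_left[OF B dB N k l])
    have e2: "(B * N) $$ (k,l) = (if k = l then s else 0)" unfolding BN using k l by simp
    show "[:lam k, 1:] * N $$ (k,l) = (if k = l then s else 0)"
      using trans[OF e1[symmetric] e2] unfolding Bent[OF k] .
  qed
  define a where "a = lam i"
  define b where "b = lam j"
  have sa0: "s = [:a, 1:] * N $$ (i,i)" using BNe[OF i i] unfolding a_def by simp
  have sa: "poly s (-a) = 0" unfolding sa0 by simp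
  have sb0: "s = [:b, 1:] * N $$ (j,j)" using BNe[OF j j] unfolding b_def by simp
  have sb: "poly s (-b) = 0" unfolding sb0 by simp
  have gN: "goodp (a - b) (-a) (N $$ (k,l))" if k: "k < n" and l: "l < n" for k l
  proof (cases "k = l")
    case False
    have h0: "[:lam k, 1:] * N $$ (k,l) = 0" using BNe[OF k l] False by simp
    have nz: "[:lam k, 1:] \<noteq> 0" by simp
    have "N $$ (k,l) = 0" using mult_eq_0_iff[of "[:lam k, 1:]" "N $$ (k,l)"] h0 nz by blast
    then show ?thesis by (simp add: goodp_def)
  next
    case True
    have e: "[:lam k, 1:] * N $$ (k,k) = s" using BNe[OF k k] by simp
    show ?thesis
    proof (cases "lam k = a")
      case False
      have ha: "poly s (-a) = (lam k - a) * poly (N $$ (k,k)) (-a)"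
        unfolding e[symmetric] by (simp add: algebra_simps)
      have "(lam k - a) * poly (N $$ (k,k)) (-a) = 0"
        by (rule trans[OF ha[symmetric] sa])
      then have "poly (N $$ (k,k)) (-a) = 0" using False by simp
      then show ?thesis using True by (simp add: goodp_def)
    next
      case T2: True
      have hb: "poly s (-b) = (lam k - b) * poly (N $$ (k,k)) (-b)"
        unfolding e[symmetric] by (simp add: algebra_simps)
      have "(lam k - b) * poly (N $$ (k,k)) (-b) = 0"
        by (rule trans[OF hb[symmetric] sb])
      moreover have "lam k - b \<noteq> 0" using T2 ne unfolding a_def b_def by simp
      ultimately have z: "poly (N $$ (k,k)) (-b) = 0" by simp
      have "(-a - -b) dvd poly (N $$ (k,k)) (-a) - poly (N $$ (k,k)) (-b)"
        by (rule poly_diff_dvd)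
      then have "(b - a) dvd poly (N $$ (k,k)) (-a)" using z by simp
      then have "- (b - a) dvd poly (N $$ (k,k)) (-a)" by (simp only: minus_dvd_iff)
      then have "(a - b) dvd poly (N $$ (k,k)) (-a)" by (simp only: minus_diff_eq)
      then show ?thesis using True by (simp add: goodp_def)
    qed
  qed
  have n1: "n - 1 < n" using i by simp
  have "goodp (a - b) (-a) ((Qi * N) $$ (k,l))" if "k < n" "l < n" for k l
    by (rule good_mult_left[OF N Qi(1) gN that])
  then have "goodp (a - b) (-a) ((Qi * N * Pi) $$ (n-1,n-1))"
    by (intro good_mult_right[OF _ Pi(1) _ n1 n1]) (insert Qi(1) N, auto)
  then show ?thesis using M1 MN unfolding goodp_def a_def b_def by simp
qed


definition dg :: "'a::zero list \<Rightarrow> 'a mat" where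
  "dg xs = mat (length xs) (length xs) (\<lambda>(i,j). if i = j then xs ! i else 0)"

definition invw :: "nat \<Rightarrow> 'a::semiring_1 mat \<Rightarrow> bool" where
  "invw n P \<longleftrightarrow> P \<in> carrier_mat n n \<and> (\<exists>Pi. Pi \<in> carrier_mat n n \<and> P * Pi = 1\<^sub>m n \<and> Pi * P = 1\<^sub>m n)"

definition eqv :: "'a::comm_ring_1 mat \<Rightarrow> 'a mat \<Rightarrow> bool" where
  "eqv B C \<longleftrightarrow> (\<exists>n P Q. B \<in> carrier_mat n n \<and> C \<in> carrier_mat n n \<and> invw n P \<and> invw n Q \<and> P * B * Q = C)"

lemma invw_invertible: "invw n P \<Longrightarrow> invertible_mat P"
  unfolding invw_def invertible_mat_def inverts_mat_def square_mat.simps by auto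

lemma invw_one: "invw n (1\<^sub>m n)"
  unfolding invw_def by (intro conjI exI[of _ "1\<^sub>m n"]) auto

lemma invw_mult: assumes "invw n P" "invw n Q" shows "invw n (P * Q)"
proof -
  obtain Pi where P: "P \<in> carrier_mat n n" "Pi \<in> carrier_mat n n" "P * Pi = 1\<^sub>m n" "Pi * P = 1\<^sub>m n"
    using assms(1) unfolding invw_def by auto
  obtain Qi where Q: "Q \<in> carrier_mat n n" "Qi \<in> carrier_mat n n" "Q * Qi = 1\<^sub>m n" "Qi * Q = 1\<^sub>m n"
    using assms(2) unfolding invw_def by auto
  have "P * Q * (Qi * Pi) = P * (Q * Qi) * Pi"
    using P(1,2) Q(1,2) by (simp add: assoc_mult_mat[of _ n n _ n _ n])
  also have "\<dots> = 1\<^sub>m n" using P Q by simp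
  finally have 1: "P * Q * (Qi * Pi) = 1\<^sub>m n" .
  have "Qi * Pi * (P * Q) = Qi * (Pi * P) * Q"
    using P(1,2) Q(1,2) by (simp add: assoc_mult_mat[of _ n n _ n _ n])
  also have "\<dots> = 1\<^sub>m n" using P Q by simp
  finally have 2: "Qi * Pi * (P * Q) = 1\<^sub>m n" .
  show ?thesis unfolding invw_def using P Q 1 2
    by (intro conjI exI[of _ "Qi * Pi"]) auto
qed

lemma eqv_refl: "B \<in> carrier_mat n n \<Longrightarrow> eqv B B"
  unfolding eqv_def by (intro exI[of _ n] exI[of _ "1\<^sub>m n"]) (auto simp: invw_one)

lemma eqv_trans: assumes "eqv A B" "eqv B C" shows "eqv A C"
proof -
  obtain n P Q where 1: "A \<in> carrier_mat n n" "B \<in> carrier_mat n n" "invw n P" "invw n Q" "P * A * Q = B"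
    using assms(1) unfolding eqv_def by auto
  obtain m P2 Q2 where 2: "B \<in> carrier_mat m m" "C \<in> carrier_mat m m" "invw m P2" "invw m Q2" "P2 * B * Q2 = C"
    using assms(2) unfolding eqv_def by auto
  have mn: "m = n" using 1(2) 2(1) by auto
  have c: "P \<in> carrier_mat n n" "Q \<in> carrier_mat n n" "P2 \<in> carrier_mat n n" "Q2 \<in> carrier_mat n n"
    using 1 2 mn unfolding invw_def by auto
  have "(P2 * P) * A * (Q * Q2) = P2 * (P * A * Q) * Q2"
    using c 1(1) by (simp add: assoc_mult_mat[of _ n n _ n _ n])
  also have "\<dots> = C" using 1(5) 2(5) by simp
  finally show ?thesis unfolding eqv_def using 1 2 mn
    by (intro exI[of _ n] exI[of _ "P2 * P"] exI[of _ "Q * Q2"]) (auto intro: invw_mult)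
qed

definition fb :: "'a::zero mat \<Rightarrow> 'a mat \<Rightarrow> 'a mat" where
  "fb X Y = four_block_mat X (0\<^sub>m (dim_row X) (dim_col Y)) (0\<^sub>m (dim_row Y) (dim_col X)) Y"

lemma fb_carrier: "X \<in> carrier_mat n1 m1 \<Longrightarrow> Y \<in> carrier_mat n2 m2 \<Longrightarrow> fb X Y \<in> carrier_mat (n1+n2) (m1+m2)"
  unfolding fb_def by auto

lemma fb_mult:
  assumes "A1 \<in> carrier_mat n1 m1" "A2 \<in> carrier_mat n2 m2" "B1 \<in> carrier_mat m1 k1" "B2 \<in> carrier_mat m2 k2"
  shows "fb A1 A2 * fb B1 B2 = fb ((A1 :: 'a::semiring_1 mat) * B1) (A2 * B2)"
proof -
  have "fb A1 A2 * fb B1 B2 = four_block_mat (A1 * B1 + 0\<^sub>m n1 m2 * 0\<^sub>m m2 k1) (A1 * 0\<^sub>m m1 k2 + 0\<^sub>m n1 m2 * B2)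
      (0\<^sub>m n2 m1 * B1 + A2 * 0\<^sub>m m2 k1) (0\<^sub>m n2 m1 * 0\<^sub>m m1 k2 + A2 * B2)"
  proof -
    have d: "dim_row A1 = n1" "dim_col A1 = m1" "dim_row A2 = n2" "dim_col A2 = m2"
      "dim_row B1 = m1" "dim_col B1 = k1" "dim_row B2 = m2" "dim_col B2 = k2" using assms by auto
    show ?thesis unfolding fb_def d by (rule mult_four_block_mat) (use assms in auto)
  qed
  also have "\<dots> = fb (A1 * B1) (A2 * B2)" unfolding fb_def using assms by simp
  finally show ?thesis .
qed

lemma fb_one: "fb (1\<^sub>m n1) (1\<^sub>m n2) = (1\<^sub>m (n1+n2) :: 'a::semiring_1 mat)"
  unfolding fb_def by simp

lemma invw_fb: assumes "invw n1 P1" "invw n2 P2" shows "invw (n1+n2) (fb P1 P2)"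
proof -
  obtain Pi where P: "P1 \<in> carrier_mat n1 n1" "Pi \<in> carrier_mat n1 n1" "P1 * Pi = 1\<^sub>m n1" "Pi * P1 = 1\<^sub>m n1"
    using assms(1) unfolding invw_def by auto
  obtain Qi where Q: "P2 \<in> carrier_mat n2 n2" "Qi \<in> carrier_mat n2 n2" "P2 * Qi = 1\<^sub>m n2" "Qi * P2 = 1\<^sub>m n2"
    using assms(2) unfolding invw_def by auto
  show ?thesis unfolding invw_def
    using P Q fb_mult[OF P(1) Q(1) P(2) Q(2)] fb_mult[OF P(2) Q(2) P(1) Q(1)]
    by (intro conjI exI[of _ "fb Pi Qi"]) (auto simp: fb_one intro!: fb_carrier)
qed

lemma eqv_fb: assumes "eqv B C" "eqv D E" shows "eqv (fb B D) (fb C E)"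
proof -
  obtain n P Q where 1: "B \<in> carrier_mat n n" "C \<in> carrier_mat n n" "invw n P" "invw n Q" "P * B * Q = C"
    using assms(1) unfolding eqv_def by auto
  obtain m P2 Q2 where 2: "D \<in> carrier_mat m m" "E \<in> carrier_mat m m" "invw m P2" "invw m Q2" "P2 * D * Q2 = E"
    using assms(2) unfolding eqv_def by auto
  have c: "P \<in> carrier_mat n n" "Q \<in> carrier_mat n n" "P2 \<in> carrier_mat m m" "Q2 \<in> carrier_mat m m"
    using 1 2 unfolding invw_def by auto
  have "fb P P2 * fb B D * fb Q Q2 = fb (P * B) (P2 * D) * fb Q Q2"
    using fb_mult[OF c(1) c(3) 1(1) 2(1)] by simp
  also have "\<dots> = fb (P * B * Q) (P2 * D * Q2)"
    using c 1(1) 2(1) by (intro fb_mult) auto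
  finally show ?thesis unfolding eqv_def using 1 2
    by (intro exI[of _ "n+m"] exI[of _ "fb P P2"] exI[of _ "fb Q Q2"]) (auto intro: invw_fb fb_carrier)
qed

lemma dg_carrier: "dg xs \<in> carrier_mat (length xs) (length xs)"
  unfolding dg_def by auto

lemma dg_append: "dg (xs @ ys) = fb (dg xs) (dg ys)"
  unfolding dg_def fb_def by (rule eq_matI) (auto simp: nth_append)

lemma eqv_local:
  assumes "eqv (dg ys) (dg ys')"
  shows "eqv (dg (xs @ ys @ zs)) (dg (xs @ ys' @ zs))"
  unfolding dg_append
  by (intro eqv_fb eqv_refl[OF dg_carrier] assms)


definition mat2 :: "'a \<Rightarrow> 'a \<Rightarrow> 'a \<Rightarrow> 'a \<Rightarrow> 'a mat" where
  "mat2 a b c d = mat 2 2 (\<lambda>(i,j). if i = 0 then (if j = 0 then a else b) else (if j = 0 then c else d))"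

lemma lt2: "(i::nat) < 2 \<Longrightarrow> i = 0 \<or> i = 1" by arith

lemma mat2_carrier: "mat2 a b c d \<in> carrier_mat 2 2" unfolding mat2_def by auto

lemma mat2_mult: "mat2 a b c d * mat2 e f g h = mat2 (a*e+b*g) (a*f+b*h) (c*e+d*g) (c*f+(d::'a::semiring_1)*h)"
proof (rule eq_matI)
  fix i j assume "i < dim_row (mat2 (a*e+b*g) (a*f+b*h) (c*e+d*g) (c*f+d*h))"
    "j < dim_col (mat2 (a*e+b*g) (a*f+b*h) (c*e+d*g) (c*f+d*h))"
  then have i: "i < 2" and j: "j < 2" by (auto simp: mat2_def)
  have s: "\<And>F. (\<Sum>k\<in>{0..<2::nat}. F k) = F 0 + F 1" by (simp add: numeral_2_eq_2)
  show "(mat2 a b c d * mat2 e f g h) $$ (i, j) = mat2 (a*e+b*g) (a*f+b*h) (c*e+d*g) (c*f+d*h) $$ (i, j)"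
    using lt2[OF i] lt2[OF j] i j by (auto simp: mat2_def scalar_prod_def s)
qed (auto simp: mat2_def)

lemma mat2_one: "mat2 1 0 0 1 = (1\<^sub>m 2 :: 'a::semiring_1 mat)"
  by (rule eq_matI) (auto simp: mat2_def)

lemma dg2: "dg [x,y] = mat2 x 0 0 y"
  by (rule eq_matI) (auto simp: dg_def mat2_def dest!: lt2)

lemma invw2: "a*e+b*g = 1 \<Longrightarrow> a*f+b*h = 0 \<Longrightarrow> c*e+d*g = 0 \<Longrightarrow> c*f+d*h = 1 \<Longrightarrow>
  e*a+f*c = 1 \<Longrightarrow> e*b+f*d = 0 \<Longrightarrow> g*a+h*c = 0 \<Longrightarrow> g*b+h*(d::'a::semiring_1) = 1 \<Longrightarrow>
  invw 2 (mat2 a b c d)"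
  unfolding invw_def
  by (intro conjI exI[of _ "mat2 e f g h"]) (auto simp: mat2_carrier mat2_mult mat2_one[symmetric])

lemma eqv_swap: "eqv (dg [x,y]) (dg [y,(x::'a::comm_ring_1)])"
proof -
  have iv: "invw 2 (mat2 (0::'a) 1 1 0)" by (rule invw2[where e=0 and f=1 and g=1 and h=0]) auto
  have "mat2 0 1 1 0 * dg [x,y] * mat2 0 1 1 0 = dg [y,x]"
    unfolding dg2 mat2_mult by simp
  then show ?thesis unfolding eqv_def using iv
    by (intro exI[of _ 2] exI[of _ "mat2 0 1 1 0"]) (auto simp: dg2 mat2_carrier)
qed

lemma eqv_merge: "eqv (dg [p, p+1]) (dg [1, p*(p+(1::'a::comm_ring_1))])"
proof -
  define q where "q = p + 1"
  have iv1: "invw 2 (mat2 (-1) 1 (-q) (q-1))"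
    by (rule invw2[where e="q-1" and f="-1" and g=q and h="-1"]) (auto simp: algebra_simps)
  have iv2: "invw 2 (mat2 1 (-q) 1 (1-q))"
    by (rule invw2[where e="1-q" and f=q and g="-1" and h=1]) (auto simp: algebra_simps)
  have "mat2 (-1) 1 (-q) (q-1) * dg [p,q] * mat2 1 (-q) 1 (1-q) = dg [1, p*q]"
    unfolding dg2 mat2_mult by (simp add: q_def algebra_simps)
  then show ?thesis unfolding eqv_def using iv1 iv2 unfolding q_def
    by (intro exI[of _ 2] exI[of _ "mat2 (-1) 1 (-q) (q-1)"] exI[of _ "mat2 1 (-q) 1 (1-q)"])
       (auto simp: dg2 mat2_carrier q_def)
qed

lemma eqv_move: "eqv (dg (xs @ x # ws @ zs)) (dg (xs @ ws @ x # zs))"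
proof (induction ws arbitrary: xs)
  case Nil
  show ?case using eqv_refl[OF dg_carrier] by simp
next
  case (Cons w ws)
  have h1: "eqv (dg (xs @ [x,w] @ ws @ zs)) (dg (xs @ [w,x] @ ws @ zs))"
    by (rule eqv_local[OF eqv_swap])
  have h2: "eqv (dg ((xs @ [w]) @ x # ws @ zs)) (dg ((xs @ [w]) @ ws @ x # zs))"
    by (rule Cons.IH)
  have h1': "eqv (dg (xs @ x # (w # ws) @ zs)) (dg ((xs @ [w]) @ x # ws @ zs))" using h1 by simp
  have "eqv (dg (xs @ x # (w # ws) @ zs)) (dg ((xs @ [w]) @ ws @ x # zs))" by (rule eqv_trans[OF h1' h2])
  then show ?case by simp
qed


definition canon :: "nat \<Rightarrow> nat \<Rightarrow> 'a \<Rightarrow> 'a \<Rightarrow> 'a::one list" where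
  "canon c d r w = replicate c 1 @ replicate d r @ replicate c w"

lemma eqv_pair:
  assumes "x \<in> {p, p+1}" "r \<in> {p, p+1}" "x \<noteq> r"
  shows "eqv (dg [x, r]) (dg [1, p*(p+(1::'a::comm_ring_1))])"
proof (cases "x = p")
  case True
  then have "r = p + 1" using assms by auto
  then show ?thesis using True eqv_merge by simp
next
  case False
  then have "x = p + 1" "r = p" using assms by auto
  then show ?thesis using eqv_trans[OF eqv_swap eqv_merge] by simp
qed

lemma main_ind:
  fixes p :: "'a::comm_ring_1"
  assumes "set xs \<subseteq> {p, p+1}"
  shows "\<exists>c d r. r \<in> {p, p+1} \<and> eqv (dg xs) (dg (canon c d r (p*(p+1))))"
  using assms
proof (induction xs)
  case Nil
  show ?case by (intro exI[of _ 0] exI[of _ p]) (auto simp: canon_def intro: eqv_refl[OF dg_carrier])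
next
  case (Cons x xs)
  define w where "w = p*(p+1)"
  from Cons obtain c d r where r: "r \<in> {p, p+1}" and e: "eqv (dg xs) (dg (canon c d r w))"
    unfolding w_def by auto
  have x: "x \<in> {p, p+1}" using Cons.prems by auto
  have e1: "eqv (dg (x # xs)) (dg (x # canon c d r w))"
    using eqv_fb[OF eqv_refl[OF dg_carrier[of "[x]"]] e] unfolding dg_append[symmetric] by simp
  have mv1: "eqv (dg (x # canon c d r w)) (dg (replicate c 1 @ x # replicate d r @ replicate c w))"
    using eqv_move[of "[]" x "replicate c 1" "replicate d r @ replicate c w"] by (simp add: canon_def)
  show ?case
  proof (cases "d = 0 \<or> x = r")
    case True
    have "replicate c 1 @ x # replicate d r @ replicate c w = canon c (Suc d) x w"
      using True by (auto simp: canon_def)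
    then have "eqv (dg (x # xs)) (dg (canon c (Suc d) x w))" using eqv_trans[OF e1 mv1] by simp
    then show ?thesis using x unfolding w_def by blast
  next
    case False
    then obtain d' where d: "d = Suc d'" and xr: "x \<noteq> r" by (cases d) auto
    have l1: "eqv (dg (replicate c 1 @ [x, r] @ replicate d' r @ replicate c w))
                  (dg (replicate c 1 @ [1, w] @ replicate d' r @ replicate c w))"
      by (rule eqv_local, unfold w_def, rule eqv_pair[OF x r xr])
    have l2: "eqv (dg ((replicate c 1 @ [1]) @ w # replicate d' r @ replicate c w))
                  (dg ((replicate c 1 @ [1]) @ replicate d' r @ w # replicate c w))"
      by (rule eqv_move)
    have "replicate c 1 @ x # replicate d r @ replicate c w = replicate c 1 @ [x, r] @ replicate d' r @ replicate c w"
      using d by simp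
    moreover have "replicate c 1 @ [1, w] @ replicate d' r @ replicate c w = (replicate c 1 @ [1]) @ w # replicate d' r @ replicate c w"
      by simp
    moreover have "(replicate c 1 @ [1]) @ replicate d' r @ w # replicate c w = canon (Suc c) d' r w"
      unfolding canon_def by (simp add: replicate_append_same[symmetric])
    ultimately have "eqv (dg (x # xs)) (dg (canon (Suc c) d' r w))"
    proof -
      have h1: "eqv (dg (x # xs)) (dg (replicate c 1 @ [x, r] @ replicate d' r @ replicate c w))"
        using eqv_trans[OF e1 mv1] d by simp
      have h2: "eqv (dg (x # xs)) (dg ((replicate c 1 @ [1]) @ w # replicate d' r @ replicate c w))"
        using eqv_trans[OF h1 l1] by simp
      have h3: "eqv (dg (x # xs)) (dg ((replicate c 1 @ [1]) @ replicate d' r @ w # replicate c w))"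
        by (rule eqv_trans[OF h2 l2])
      show ?thesis using h3 unfolding canon_def by (simp add: replicate_append_same[symmetric])
    qed
    then show ?thesis using r unfolding w_def by blast
  qed
qed

lemma canon_nth:
  "i < length (canon c d r w) \<Longrightarrow> canon c d r w ! i = (if i < c then 1 else if i < c + d then r else w)"
  unfolding canon_def by (auto simp: nth_append)

lemma canon_smith:
  assumes "r dvd w"
  shows "is_smith_form (dg (canon c d r (w::'a::comm_ring_1)))"
  unfolding is_smith_form_def
proof (intro conjI allI impI)
  show "diagonal_mat (dg (canon c d r w))" unfolding diagonal_mat_def dg_def by auto
next
  fix i assume i: "Suc i < min (dim_row (dg (canon c d r w))) (dim_col (dg (canon c d r w)))"
  then have i1: "Suc i < length (canon c d r w)" by (simp add: dg_def)
  then have i0: "i < length (canon c d r w)" by simp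
  have "canon c d r w ! i dvd canon c d r w ! Suc i"
    unfolding canon_nth[OF i1] canon_nth[OF i0] using assms by auto
  then show "dg (canon c d r w) $$ (i, i) dvd dg (canon c d r w) $$ (Suc i, Suc i)"
    using i0 i1 by (simp add: dg_def)
qed

lemma has_smith_from:
  fixes p :: "'a::comm_ring_1"
  assumes "set xs \<subseteq> {p, p+1}"
  shows "has_smith_form (dg xs)"
proof -
  obtain c d r where r: "r \<in> {p, p+1}" and e: "eqv (dg xs) (dg (canon c d r (p*(p+1))))"
    using main_ind[OF assms] by blast
  have rd: "r dvd p*(p+1)" using r by auto
  obtain n P Q where 1: "dg xs \<in> carrier_mat n n" "invw n P" "invw n Q"
      "P * dg xs * Q = dg (canon c d r (p*(p+1)))"
    using e unfolding eqv_def by auto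
  have n: "n = length xs" using 1(1) dg_carrier[of xs] by auto
  have dims: "dim_row (dg xs) = length xs" "dim_col (dg xs) = length xs" by (simp_all add: dg_def)
  have c: "P \<in> carrier_mat (length xs) (length xs)" "Q \<in> carrier_mat (length xs) (length xs)"
    using 1(2,3) n unfolding invw_def by auto
  have iv: "invertible_mat P" "invertible_mat Q" using 1(2,3) by (auto intro: invw_invertible)
  have sm: "is_smith_form (P * dg xs * Q)" using 1(4) canon_smith[OF rd] by simp
  show ?thesis unfolding has_smith_form_def dims using c iv sm by blast
qed


lemma plus_tI_carrier: "A \<in> carrier_mat n n \<Longrightarrow> plus_tI A \<in> carrier_mat n n"
  unfolding plus_tI_def by auto

lemma plus_tI_index: "A \<in> carrier_mat n n \<Longrightarrow> k < n \<Longrightarrow> l < n \<Longrightarrow>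
  plus_tI A $$ (k,l) = [:A $$ (k,l):] + (if k = l then [:0,1:] else 0)"
  unfolding plus_tI_def by auto

lemma plus_tI_dg: assumes A: "A \<in> carrier_mat n n" and d: "diagonal_mat A"
  shows "plus_tI A = dg (map (\<lambda>k. [:A $$ (k,k), 1:]) [0..<n])"
proof (rule eq_matI)
  fix i j assume "i < dim_row (dg (map (\<lambda>k. [:A $$ (k,k), 1:]) [0..<n]))"
    "j < dim_col (dg (map (\<lambda>k. [:A $$ (k,k), 1:]) [0..<n]))"
  then have i: "i < n" and j: "j < n" by (auto simp: dg_def)
  show "plus_tI A $$ (i,j) = dg (map (\<lambda>k. [:A $$ (k,k), 1:]) [0..<n]) $$ (i,j)"
    using plus_tI_index[OF A i j] d A i j by (auto simp: dg_def diagonal_mat_def)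
qed (insert plus_tI_carrier[OF A], auto simp: dg_def)

lemma part1:
  fixes A :: "'a::idom mat"
  assumes A: "A \<in> carrier_mat n n" and d: "diagonal_mat A" and h: "has_smith_form (plus_tI A)"
    and i: "i < n" and j: "j < n" and ne: "A $$ (i,i) \<noteq> A $$ (j,j)"
  shows "(A $$ (i,i) - A $$ (j,j)) dvd 1"
proof -
  have B: "plus_tI A \<in> carrier_mat n n" by (rule plus_tI_carrier[OF A])
  obtain P Q where PQ: "P \<in> carrier_mat n n" "Q \<in> carrier_mat n n" "invertible_mat P" "invertible_mat Q"
     "is_smith_form (P * plus_tI A * Q)"
    using h B unfolding has_smith_form_def by auto
  have dB: "diagonal_mat (plus_tI A)" using plus_tI_index[OF A] d A B
    unfolding diagonal_mat_def by auto
  show ?thesis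
    by (rule part1_core[OF B dB _ PQ i j, of "\<lambda>k. A $$ (k,k)"])
       (insert ne plus_tI_index[OF A], auto)
qed

theorem proposition8p9:
  shows "(\<forall>(A :: 'a::idom mat) n. A \<in> carrier_mat n n \<longrightarrow> diagonal_mat A \<longrightarrow>
            has_smith_form (plus_tI A) \<longrightarrow>
            (\<forall>i<n. \<forall>j<n. A $$ (i,i) \<noteq> A $$ (j,j) \<longrightarrow> (A $$ (i,i) - A $$ (j,j)) dvd 1))
       \<and> (\<forall>(A :: int mat) n. A \<in> carrier_mat n n \<longrightarrow> diagonal_mat A \<longrightarrow>
            (has_smith_form (plus_tI A) \<longleftrightarrow>
              (card {A $$ (i,i) | i. i < n} \<le> 2 \<and>
               (card {A $$ (i,i) | i. i < n} = 2 \<longrightarrow>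
                  (\<forall>i<n. \<forall>j<n. A $$ (i,i) \<noteq> A $$ (j,j) \<longrightarrow> \<bar>A $$ (i,i) - A $$ (j,j)\<bar> = 1)))))"
proof (intro conjI allI impI)
  fix A :: "'a mat" and n i j
  assume "A \<in> carrier_mat n n" "diagonal_mat A" "has_smith_form (plus_tI A)" "i < n" "j < n"
    "A $$ (i,i) \<noteq> A $$ (j,j)"
  then show "(A $$ (i,i) - A $$ (j,j)) dvd 1" by (rule part1)
next
  fix A :: "int mat" and n
  assume A: "A \<in> carrier_mat n n" and d: "diagonal_mat A"
  define V where "V = {A $$ (i,i) | i. i < n}"
  have finV: "finite V" unfolding V_def by simp
  show "has_smith_form (plus_tI A) \<longleftrightarrow>
        (card {A $$ (i,i) | i. i < n} \<le> 2 \<and>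
         (card {A $$ (i,i) | i. i < n} = 2 \<longrightarrow>
           (\<forall>i<n. \<forall>j<n. A $$ (i,i) \<noteq> A $$ (j,j) \<longrightarrow> \<bar>A $$ (i,i) - A $$ (j,j)\<bar> = 1)))"
    unfolding V_def[symmetric]
  proof
    assume h: "has_smith_form (plus_tI A)"
    have H: "\<forall>i<n. \<forall>j<n. A $$ (i,i) \<noteq> A $$ (j,j) \<longrightarrow> \<bar>A $$ (i,i) - A $$ (j,j)\<bar> = 1"
      using part1[OF A d h] by (simp add: zdvd1_eq)
    have "card V \<le> 2"
    proof (cases "n = 0")
      case True then show ?thesis unfolding V_def by simp
    next
      case False
      define v where "v = A $$ (0,0)"
      have sub: "V \<subseteq> {v - 1, v, v + 1}"
      proof
        fix x assume "x \<in> V"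
        then obtain i where i: "i < n" "x = A $$ (i,i)" unfolding V_def by auto
        then show "x \<in> {v - 1, v, v + 1}" using H False unfolding v_def by fastforce
      qed
      have "\<not> (v - 1 \<in> V \<and> v + 1 \<in> V)"
      proof
        assume "v - 1 \<in> V \<and> v + 1 \<in> V"
        then obtain i j where "i < n" "j < n" "A $$ (i,i) = v - 1" "A $$ (j,j) = v + 1"
          unfolding V_def by auto
        then show False using H by fastforce
      qed
      then have "V \<subseteq> {v - 1, v} \<or> V \<subseteq> {v, v + 1}" using sub by auto
      then show ?thesis
      proof
        assume "V \<subseteq> {v - 1, v}"
        then have "card V \<le> card {v - 1, v}" by (rule card_mono[rotated]) simp
        then show ?thesis by simp
      next
        assume "V \<subseteq> {v, v + 1}"
        then have "card V \<le> card {v, v + 1}" by (rule card_mono[rotated]) simp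
        then show ?thesis by simp
      qed
    qed
    then show "card V \<le> 2 \<and> (card V = 2 \<longrightarrow>
        (\<forall>i<n. \<forall>j<n. A $$ (i,i) \<noteq> A $$ (j,j) \<longrightarrow> \<bar>A $$ (i,i) - A $$ (j,j)\<bar> = 1))"
      using H by simp
  next
    assume c: "card V \<le> 2 \<and> (card V = 2 \<longrightarrow>
        (\<forall>i<n. \<forall>j<n. A $$ (i,i) \<noteq> A $$ (j,j) \<longrightarrow> \<bar>A $$ (i,i) - A $$ (j,j)\<bar> = 1))"
    have "\<exists>a. \<forall>k<n. A $$ (k,k) = a \<or> A $$ (k,k) = a + 1"
    proof (cases "n = 0")
      case True then show ?thesis by simp
    next
      case False
      have ne: "V \<noteq> {}" using False unfolding V_def by auto
      define a where "a = Min V"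
      have aV: "a \<in> V" unfolding a_def using Min_in[OF finV ne] .
      then obtain i0 where i0: "i0 < n" "A $$ (i0,i0) = a" unfolding V_def by auto
      show ?thesis
      proof (intro exI[of _ a] allI impI)
        fix k assume k: "k < n"
        have kV: "A $$ (k,k) \<in> V" unfolding V_def using k by auto
        have ge: "a \<le> A $$ (k,k)" unfolding a_def using Min_le[OF finV kV] .
        show "A $$ (k,k) = a \<or> A $$ (k,k) = a + 1"
        proof (cases "A $$ (k,k) = a")
          case False
          have "{a, A $$ (k,k)} \<subseteq> V" using aV kV by auto
          then have "card {a, A $$ (k,k)} \<le> card V" by (rule card_mono[OF finV])
          then have "card V = 2" using c False by simp
          then have "\<bar>A $$ (k,k) - A $$ (i0,i0)\<bar> = 1" using c k i0 False by auto
          then show ?thesis using ge i0 by auto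
        qed simp
      qed
    qed
    then obtain a where a: "\<forall>k<n. A $$ (k,k) = a \<or> A $$ (k,k) = a + 1" by blast
    have "set (map (\<lambda>k. [:A $$ (k,k), 1:]) [0..<n]) \<subseteq> {[:a,1:], [:a,1:] + 1}"
      using a by (auto simp: one_pCons)
    then have "has_smith_form (dg (map (\<lambda>k. [:A $$ (k,k), 1:]) [0..<n]))"
      by (rule has_smith_from)
    then show "has_smith_form (plus_tI A)" using plus_tI_dg[OF A d] by simp
  qed
qed

end
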